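(* Let $(V_1,\dots,V_n)$ be an $n$-tuple of doubly non-commuting isometries on $H$. (1) Let $A\ne B$ be subsets of $\{1,\dots,n\}$ and let $L_A,L_B$ be subspaces reducing all $V_1,\dots,V_n$ such that $V_i|_{L_A}$ is a pure isometry for $i\in A$ and unitary for $i\in A^c$, and $V_i|_{L_B}$ is a pure isometry for $i\in B$ and unitary for $i\in B^c$. Then $L_A\perp L_B$. (2) Suppose that for each $A\subseteq\{1,\dots,n\}$, $L_A$ is a subspace reducing all $V_1,\dots,V_n$ such that $V_i|_{L_A}$ is a pure isometry for $i\in A$ and unitary for $i\in A^c$. If $H=\bigoplus_{A}L_A$ algebraically, then $L_A=H_A$ for all $A$.
   Context: Fix $n\ge1$ and $z_{ij}\in\mathbb T$ ($i\ne j$) with $z_{ji}=\overline{z_{ij}}$; $(V_1,\dots,V_n)$ is doubly non-commuting if the $V_i$ are isometries with $V_i^*V_j=\overline{z_{ij}}V_jV_i^*$ for $i\ne j$. Subspaces are closed; $A^c$ is the complement in $\{1,\dots,n\}$. For an isometry $S$ and an $S$-invariant subspace $L$, $S|_L$ is a pure isometry if $\{0\}$ is the only $S$-invariant subspace of $L$ on which $S$ is unitary. $H^{\mathrm{iso}}(S)=\bigoplus_{k\ge0}S^k(\ker S^* )$, $H^{\mathrm{uni}}(S)=\bigcap_{k\ge0}S^k(H)$, and $H_A=\bigcap_{i\in A}H^{\mathrm{iso}}(V_i)\cap\bigcap_{i\in A^c}H^{\mathrm{uni}}(V_i)$ (empty intersection $=H$). *)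

theory Defs
  imports "HOL-Analysis.Analysis"
begin

text \<open>A complex Hilbert space is modelled on a type 'h with its additive group
structure, together with an explicit complex scalar multiplication sc and an inner
product ip (linear in the first, conjugate-linear in the second argument).\<close>

definition hnorm :: "('h \<Rightarrow> 'h \<Rightarrow> complex) \<Rightarrow> 'h \<Rightarrow> real" where
  "hnorm ip x = sqrt (Re (ip x x))"

definition hconv :: "('h::ab_group_add \<Rightarrow> 'h \<Rightarrow> complex) \<Rightarrow> (nat \<Rightarrow> 'h) \<Rightarrow> 'h \<Rightarrow> bool" where
  "hconv ip f x \<longleftrightarrow> (\<lambda>k. hnorm ip (f k - x)) \<longlonglongrightarrow> 0"

definition hcauchy :: "('h::ab_group_add \<Rightarrow> 'h \<Rightarrow> complex) \<Rightarrow> (nat \<Rightarrow> 'h) \<Rightarrow> bool" where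
  "hcauchy ip f \<longleftrightarrow> (\<forall>e>0. \<exists>N. \<forall>m\<ge>N. \<forall>k\<ge>N. hnorm ip (f m - f k) < e)"

definition hilbert_space :: "(complex \<Rightarrow> 'h::ab_group_add \<Rightarrow> 'h) \<Rightarrow> ('h \<Rightarrow> 'h \<Rightarrow> complex) \<Rightarrow> bool" where
  "hilbert_space sc ip \<longleftrightarrow>
     (\<forall>a x y. sc a (x + y) = sc a x + sc a y) \<and>
     (\<forall>a b x. sc (a + b) x = sc a x + sc b x) \<and>
     (\<forall>a b x. sc (a * b) x = sc a (sc b x)) \<and>
     (\<forall>x. sc 1 x = x) \<and>
     (\<forall>x y z. ip (x + y) z = ip x z + ip y z) \<and>
     (\<forall>a x y. ip (sc a x) y = a * ip x y) \<and>
     (\<forall>x y. ip y x = cnj (ip x y)) \<and>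
     (\<forall>x. Im (ip x x) = 0 \<and> Re (ip x x) \<ge> 0) \<and>
     (\<forall>x. ip x x = 0 \<longrightarrow> x = 0) \<and>
     (\<forall>f. hcauchy ip f \<longrightarrow> (\<exists>x. hconv ip f x))"

definition closed_subspace :: "(complex \<Rightarrow> 'h::ab_group_add \<Rightarrow> 'h) \<Rightarrow> ('h \<Rightarrow> 'h \<Rightarrow> complex) \<Rightarrow> 'h set \<Rightarrow> bool" where
  "closed_subspace sc ip M \<longleftrightarrow>
     0 \<in> M \<and> (\<forall>x\<in>M. \<forall>y\<in>M. x + y \<in> M) \<and> (\<forall>a. \<forall>x\<in>M. sc a x \<in> M) \<and>
     (\<forall>f x. (\<forall>k. f k \<in> M) \<and> hconv ip f x \<longrightarrow> x \<in> M)"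

definition hlinear :: "(complex \<Rightarrow> 'h::ab_group_add \<Rightarrow> 'h) \<Rightarrow> ('h \<Rightarrow> 'h) \<Rightarrow> bool" where
  "hlinear sc T \<longleftrightarrow> (\<forall>x y. T (x + y) = T x + T y) \<and> (\<forall>a x. T (sc a x) = sc a (T x))"

definition isometry :: "(complex \<Rightarrow> 'h::ab_group_add \<Rightarrow> 'h) \<Rightarrow> ('h \<Rightarrow> 'h \<Rightarrow> complex) \<Rightarrow> ('h \<Rightarrow> 'h) \<Rightarrow> bool" where
  "isometry sc ip V \<longleftrightarrow> hlinear sc V \<and> (\<forall>x. hnorm ip (V x) = hnorm ip x)"

definition is_adjoint :: "('h \<Rightarrow> 'h \<Rightarrow> complex) \<Rightarrow> ('h \<Rightarrow> 'h) \<Rightarrow> ('h \<Rightarrow> 'h) \<Rightarrow> bool" where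
  "is_adjoint ip V W \<longleftrightarrow> (\<forall>x y. ip (V x) y = ip x (W y))"

definition doubly_noncommuting ::
  "(complex \<Rightarrow> 'h::ab_group_add \<Rightarrow> 'h) \<Rightarrow> ('h \<Rightarrow> 'h \<Rightarrow> complex) \<Rightarrow> nat \<Rightarrow> (nat \<Rightarrow> nat \<Rightarrow> complex)
    \<Rightarrow> (nat \<Rightarrow> 'h \<Rightarrow> 'h) \<Rightarrow> (nat \<Rightarrow> 'h \<Rightarrow> 'h) \<Rightarrow> bool" where
  "doubly_noncommuting sc ip n z V W \<longleftrightarrow>
     (\<forall>i\<in>{1..n}. isometry sc ip (V i) \<and> is_adjoint ip (V i) (W i)) \<and>
     (\<forall>i\<in>{1..n}. \<forall>j\<in>{1..n}. i \<noteq> j \<longrightarrow>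
        cmod (z i j) = 1 \<and> z j i = cnj (z i j) \<and>
        (\<forall>x. W i (V j x) = sc (cnj (z i j)) (V j (W i x))))"

definition reducing :: "(complex \<Rightarrow> 'h::ab_group_add \<Rightarrow> 'h) \<Rightarrow> ('h \<Rightarrow> 'h \<Rightarrow> complex) \<Rightarrow> ('h \<Rightarrow> 'h) \<Rightarrow> ('h \<Rightarrow> 'h) \<Rightarrow> 'h set \<Rightarrow> bool" where
  "reducing sc ip V W L \<longleftrightarrow> closed_subspace sc ip L \<and> V ` L \<subseteq> L \<and> W ` L \<subseteq> L"

text \<open>For an isometry S and S-invariant L: S|_L is unitary iff S maps L onto L.\<close>
definition unitary_on :: "('h \<Rightarrow> 'h) \<Rightarrow> 'h set \<Rightarrow> bool" where
  "unitary_on S L \<longleftrightarrow> S ` L = L"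

definition pure_on :: "(complex \<Rightarrow> 'h::ab_group_add \<Rightarrow> 'h) \<Rightarrow> ('h \<Rightarrow> 'h \<Rightarrow> complex) \<Rightarrow> ('h \<Rightarrow> 'h) \<Rightarrow> 'h set \<Rightarrow> bool" where
  "pure_on sc ip S L \<longleftrightarrow> S ` L \<subseteq> L \<and>
     (\<forall>K. closed_subspace sc ip K \<and> K \<subseteq> L \<and> S ` K \<subseteq> K \<and> unitary_on S K \<longrightarrow> K = {0})"

definition horth :: "('h \<Rightarrow> 'h \<Rightarrow> complex) \<Rightarrow> 'h set \<Rightarrow> 'h set \<Rightarrow> bool" where
  "horth ip M N \<longleftrightarrow> (\<forall>x\<in>M. \<forall>y\<in>N. ip x y = 0)"

definition hclosure :: "('h::ab_group_add \<Rightarrow> 'h \<Rightarrow> complex) \<Rightarrow> 'h set \<Rightarrow> 'h set" where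
  "hclosure ip M = {x. \<exists>f. (\<forall>k. f k \<in> M) \<and> hconv ip f x}"

text \<open>H^iso(S) = closed orthogonal sum of the S^k(ker S^*), i.e. the closure of the
(algebraic) sum of these subspaces.\<close>
definition H_iso :: "('h::ab_group_add \<Rightarrow> 'h \<Rightarrow> complex) \<Rightarrow> ('h \<Rightarrow> 'h) \<Rightarrow> ('h \<Rightarrow> 'h) \<Rightarrow> 'h set" where
  "H_iso ip S Sadj = hclosure ip
     {x. \<exists>N g. (\<forall>k<N. g k \<in> (S ^^ k) ` {y. Sadj y = 0}) \<and> x = (\<Sum>k<N. g k)}"

definition H_uni :: "('h \<Rightarrow> 'h) \<Rightarrow> 'h set" where
  "H_uni S = (\<Inter>k. (S ^^ k) ` UNIV)"

definition H_A :: "('h::ab_group_add \<Rightarrow> 'h \<Rightarrow> complex) \<Rightarrow> nat \<Rightarrow> (nat \<Rightarrow> 'h \<Rightarrow> 'h) \<Rightarrow> (nat \<Rightarrow> 'h \<Rightarrow> 'h) \<Rightarrow> nat set \<Rightarrow> 'h set" where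
  "H_A ip n V W A = {x. (\<forall>i\<in>A. x \<in> H_iso ip (V i) (W i)) \<and> (\<forall>i\<in>{1..n} - A. x \<in> H_uni (V i))}"

definition type_A_subspace ::
  "(complex \<Rightarrow> 'h::ab_group_add \<Rightarrow> 'h) \<Rightarrow> ('h \<Rightarrow> 'h \<Rightarrow> complex) \<Rightarrow> nat \<Rightarrow> (nat \<Rightarrow> 'h \<Rightarrow> 'h) \<Rightarrow> (nat \<Rightarrow> 'h \<Rightarrow> 'h)
    \<Rightarrow> nat set \<Rightarrow> 'h set \<Rightarrow> bool" where
  "type_A_subspace sc ip n V W A L \<longleftrightarrow>
     (\<forall>i\<in>{1..n}. reducing sc ip (V i) (W i) L) \<and>
     (\<forall>i\<in>A. pure_on sc ip (V i) L) \<and> (\<forall>i\<in>{1..n} - A. unitary_on (V i) L)"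

end

theory Submission
  imports Defs
begin

locale hs =
  fixes sc :: "complex \<Rightarrow> 'h::ab_group_add \<Rightarrow> 'h" and ip :: "'h \<Rightarrow> 'h \<Rightarrow> complex"
  assumes H: "hilbert_space sc ip"
begin
lemma HH: "(\<forall>a x y. sc a (x + y) = sc a x + sc a y) \<and>
     (\<forall>a b x. sc (a + b) x = sc a x + sc b x) \<and>
     (\<forall>a b x. sc (a * b) x = sc a (sc b x)) \<and>
     (\<forall>x. sc 1 x = x) \<and>
     (\<forall>x y z. ip (x + y) z = ip x z + ip y z) \<and>
     (\<forall>a x y. ip (sc a x) y = a * ip x y) \<and>
     (\<forall>x y. ip y x = cnj (ip x y)) \<and>
     (\<forall>x. Im (ip x x) = 0 \<and> Re (ip x x) \<ge> 0) \<and>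
     (\<forall>x. ip x x = 0 \<longrightarrow> x = 0) \<and>
     (\<forall>f. hcauchy ip f \<longrightarrow> (\<exists>x. hconv ip f x))"
  using H unfolding hilbert_space_def .
lemma sc_addR: "sc a (x + y) = sc a x + sc a y" using HH[THEN conjunct1] by blast
lemma sc_addL: "sc (a + b) x = sc a x + sc b x" using HH[THEN conjunct2, THEN conjunct1] by blast
lemma sc_mult: "sc (a * b) x = sc a (sc b x)" using HH[THEN conjunct2, THEN conjunct2, THEN conjunct1] by blast
lemma sc_one[simp]: "sc 1 x = x" using HH[THEN conjunct2, THEN conjunct2, THEN conjunct2, THEN conjunct1] by blast
lemma ip_addL: "ip (x + y) z = ip x z + ip y z" using HH[THEN conjunct2, THEN conjunct2, THEN conjunct2, THEN conjunct2, THEN conjunct1] by blast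
lemma ip_scL: "ip (sc a x) y = a * ip x y" using HH[THEN conjunct2, THEN conjunct2, THEN conjunct2, THEN conjunct2, THEN conjunct2, THEN conjunct1] by blast
lemma ip_sym: "ip y x = cnj (ip x y)" using HH[THEN conjunct2, THEN conjunct2, THEN conjunct2, THEN conjunct2, THEN conjunct2, THEN conjunct2, THEN conjunct1] by blast
lemma ip_self_Im[simp]: "Im (ip x x) = 0" using HH[THEN conjunct2, THEN conjunct2, THEN conjunct2, THEN conjunct2, THEN conjunct2, THEN conjunct2, THEN conjunct2, THEN conjunct1, THEN spec, THEN conjunct1] .
lemma ip_self_Re: "Re (ip x x) \<ge> 0" using HH[THEN conjunct2, THEN conjunct2, THEN conjunct2, THEN conjunct2, THEN conjunct2, THEN conjunct2, THEN conjunct2, THEN conjunct1, THEN spec, THEN conjunct2] .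
lemma ip_self_0: "ip x x = 0 \<Longrightarrow> x = 0" using HH[THEN conjunct2, THEN conjunct2, THEN conjunct2, THEN conjunct2, THEN conjunct2, THEN conjunct2, THEN conjunct2, THEN conjunct2, THEN conjunct1] by blast
lemma complete: "hcauchy ip f \<Longrightarrow> \<exists>x. hconv ip f x" using HH[THEN conjunct2, THEN conjunct2, THEN conjunct2, THEN conjunct2, THEN conjunct2, THEN conjunct2, THEN conjunct2, THEN conjunct2, THEN conjunct2] by blast

lemma sc_zeroR[simp]: "sc a 0 = 0"
proof (rule add_left_imp_eq[of "sc a 0"])
  show "sc a 0 + sc a 0 = sc a 0 + 0" using sc_addR[of a 0 0] unfolding add_0_right by (rule sym)
qed
lemma sc_zeroL[simp]: "sc 0 x = 0"
proof (rule add_left_imp_eq[of "sc 0 x"])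
  show "sc 0 x + sc 0 x = sc 0 x + 0" using sc_addL[of 0 0 x] unfolding add_0_right by (rule sym)
qed
lemma sc_minusR: "sc a (- x) = - sc a x"
proof -
  have "sc a x + sc a (-x) = sc a (x + -x)" by (rule sc_addR[symmetric])
  also have "\<dots> = 0" by simp
  finally have "sc a x + sc a (-x) = 0" .
  from minus_unique[OF this] show ?thesis by (rule sym)
qed
lemma sc_diffR: "sc a (x - y) = sc a x - sc a y"
  by (simp only: diff_conv_add_uminus sc_addR sc_minusR)
lemma ip_addR: "ip z (x + y) = ip z x + ip z y"
  using ip_sym[of z "x+y"] ip_sym[of z x] ip_sym[of z y] ip_addL[of x y z] by simp
lemma ip_scR: "ip x (sc a y) = cnj a * ip x y"
  using ip_sym[of x "sc a y"] ip_sym[of x y] ip_scL[of a y x] by simp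
lemma ip_zeroL[simp]: "ip 0 y = 0"
proof (rule add_left_imp_eq[of "ip 0 y"])
  show "ip 0 y + ip 0 y = ip 0 y + 0" using ip_addL[of 0 0 y] unfolding add_0_right by (rule sym)
qed
lemma ip_zeroR[simp]: "ip y 0 = 0"
proof (rule add_left_imp_eq[of "ip y 0"])
  show "ip y 0 + ip y 0 = ip y 0 + 0" using ip_addR[of y 0 0] unfolding add_0_right by (rule sym)
qed
lemma ip_minusL: "ip (- x) y = - ip x y"
proof -
  have "ip x y + ip (-x) y = ip (x + -x) y" by (rule ip_addL[symmetric])
  also have "\<dots> = 0" by simp
  finally have "ip x y + ip (-x) y = 0" .
  from minus_unique[OF this] show ?thesis by (rule sym)
qed
lemma ip_minusR: "ip y (- x) = - ip y x"
proof -
  have "ip y x + ip y (-x) = ip y (x + -x)" by (rule ip_addR[symmetric])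
  also have "\<dots> = 0" by simp
  finally have "ip y x + ip y (-x) = 0" .
  from minus_unique[OF this] show ?thesis by (rule sym)
qed
lemma ip_diffL: "ip (x - z) y = ip x y - ip z y"
  by (simp only: diff_conv_add_uminus ip_addL ip_minusL)
lemma ip_diffR: "ip y (x - z) = ip y x - ip y z"
  by (simp only: diff_conv_add_uminus ip_addR ip_minusR)
lemma ip_self_real: "ip x x = complex_of_real (Re (ip x x))"
  by (simp add: complex_eq_iff)
lemma hnorm_ge0: "hnorm ip x \<ge> 0" by (simp add: hnorm_def ip_self_Re)
lemma hnorm_sq: "(hnorm ip x)^2 = Re (ip x x)"
  by (simp add: hnorm_def ip_self_Re)
lemma ip_self_hnorm: "ip x x = complex_of_real ((hnorm ip x)^2)"
  by (subst ip_self_real) (simp add: hnorm_sq)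
lemma hnorm_zero_iff[simp]: "hnorm ip x = 0 \<longleftrightarrow> x = 0"
proof
  assume "hnorm ip x = 0" then have "ip x x = 0" by (simp add: ip_self_hnorm)
  then show "x = 0" by (rule ip_self_0)
qed (simp add: hnorm_def)
lemma hnorm_0[simp]: "hnorm ip 0 = 0" by simp
lemma ip_eq_0_iff: "ip x x = 0 \<longleftrightarrow> x = 0"
  by (auto intro: ip_self_0)
lemma hnorm_minus: "hnorm ip (- x) = hnorm ip x"
  by (simp add: hnorm_def ip_minusL ip_minusR)
lemma hnorm_commute: "hnorm ip (x - y) = hnorm ip (y - x)"
  using hnorm_minus[of "x - y"] by simp
lemma hnorm_sc: "hnorm ip (sc a x) = cmod a * hnorm ip x"
proof -
  have "ip (sc a x) (sc a x) = a * cnj a * ip x x" by (simp add: ip_scL ip_scR)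
  then have "Re (ip (sc a x) (sc a x)) = (cmod a)^2 * Re (ip x x)"
    by (simp add: complex_mult_cnj cmod_power2)
  then show ?thesis by (simp add: hnorm_def real_sqrt_mult)
qed
lemma Re_expand_add: "Re (ip (x + y) (x + y)) = Re (ip x x) + 2 * Re (ip x y) + Re (ip y y)"
proof -
  have "Re (ip y x) = Re (ip x y)" by (subst ip_sym) simp
  then show ?thesis by (simp add: ip_addL ip_addR)
qed
lemma Re_expand_diff: "Re (ip (x - y) (x - y)) = Re (ip x x) - 2 * Re (ip x y) + Re (ip y y)"
proof -
  have "Re (ip y x) = Re (ip x y)" by (subst ip_sym) simp
  then show ?thesis by (simp add: ip_diffL ip_diffR)
qed

lemma cauchy_schwarz: "cmod (ip x y) \<le> hnorm ip x * hnorm ip y"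
proof (cases "y = 0")
  case True then show ?thesis by (simp add: hnorm_ge0)
next
  case False
  define r where "r = Re (ip y y)"
  define c where "c = ip x y"
  have rn: "Re (ip y y) \<noteq> 0"
  proof
    assume "Re (ip y y) = 0"
    then have "ip y y = 0" using ip_self_real[of y] by simp
    then show False using False ip_self_0 by blast
  qed
  have r0: "r > 0" using ip_self_Re[of y] rn unfolding r_def by linarith
  define t where "t = c / complex_of_real r"
  have e1: "ip x (sc t y) = complex_of_real ((cmod c)^2 / r)"
    by (simp add: ip_scR t_def c_def[symmetric] complex_mult_cnj cmod_power2 mult.commute)
  have e2: "Re (ip (sc t y) (sc t y)) = (cmod c)^2 / r"
  proof -
    have "cmod t = cmod c / r" using r0 by (simp add: t_def norm_divide)
    then have "(hnorm ip (sc t y))^2 = (cmod c / r)^2 * r"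
      by (simp only: hnorm_sc power_mult_distrib hnorm_sq r_def)
    also have "\<dots> = (cmod c)^2 / r" using r0 by (simp add: power2_eq_square field_simps)
    finally show ?thesis by (simp only: hnorm_sq)
  qed
  have "0 \<le> Re (ip (x - sc t y) (x - sc t y))" by (rule ip_self_Re)
  also have "\<dots> = Re (ip x x) - (cmod c)^2 / r"
    by (simp add: Re_expand_diff e1 e2)
  finally have "(cmod c)^2 \<le> Re (ip x x) * r" using r0 by (simp add: field_simps)
  also have "\<dots> = (hnorm ip x * hnorm ip y)^2" by (simp add: power_mult_distrib hnorm_sq r_def)
  finally show ?thesis unfolding c_def
    by (rule power2_le_imp_le) (simp add: hnorm_ge0)
qed

lemma hnorm_triangle: "hnorm ip (x + y) \<le> hnorm ip x + hnorm ip y"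
proof -
  have "Re (ip x y) \<le> hnorm ip x * hnorm ip y"
    using cauchy_schwarz[of x y] complex_Re_le_cmod[of "ip x y"] by linarith
  then have "(hnorm ip (x + y))^2 \<le> (hnorm ip x + hnorm ip y)^2"
    by (simp add: hnorm_sq Re_expand_add power2_sum)
  then show ?thesis by (rule power2_le_imp_le) (simp add: hnorm_ge0 add_nonneg_nonneg)
qed
lemma hnorm_triangle_diff: "hnorm ip (x - z) \<le> hnorm ip (x - y) + hnorm ip (y - z)"
  using hnorm_triangle[of "x - y" "y - z"] by simp
lemma hnorm_rev: "\<bar>hnorm ip x - hnorm ip y\<bar> \<le> hnorm ip (x - y)"
proof -
  have "hnorm ip x \<le> hnorm ip (x - y) + hnorm ip y" using hnorm_triangle[of "x - y" y] by simp
  moreover have "hnorm ip y \<le> hnorm ip (x - y) + hnorm ip x"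
    using hnorm_triangle[of "y - x" x] hnorm_commute[of x y] by simp
  ultimately show ?thesis unfolding abs_le_iff by linarith
qed

end

context hs begin

lemma real_tendsto_bound:
  fixes a b :: "nat \<Rightarrow> real"
  assumes "\<And>k. \<bar>a k - l\<bar> \<le> b k" "b \<longlonglongrightarrow> 0" shows "a \<longlonglongrightarrow> l"
proof -
  have "(\<lambda>k. a k - l) \<longlonglongrightarrow> 0"
    by (rule Lim_null_comparison[OF _ assms(2)]) (use assms(1) in simp)
  then show ?thesis by (rule LIM_zero_cancel)
qed

lemma cplx_tendsto_bound:
  fixes a :: "nat \<Rightarrow> complex" and b :: "nat \<Rightarrow> real"
  assumes "\<And>k. cmod (a k - l) \<le> b k" "b \<longlonglongrightarrow> 0" shows "a \<longlonglongrightarrow> l"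
proof -
  have "(\<lambda>k. a k - l) \<longlonglongrightarrow> 0"
    by (rule Lim_null_comparison[OF _ assms(2)]) (use assms(1) in simp)
  then show ?thesis by (rule LIM_zero_cancel)
qed

lemma hconv_bound:
  assumes "hconv ip f x" "\<And>k. hnorm ip (g k - y) \<le> C * hnorm ip (f k - x)"
  shows "hconv ip g y"
proof -
  have "(\<lambda>k. C * hnorm ip (f k - x)) \<longlonglongrightarrow> C * 0"
    using assms(1) unfolding hconv_def by (intro tendsto_mult tendsto_const)
  then have lim: "(\<lambda>k. C * hnorm ip (f k - x)) \<longlonglongrightarrow> 0" by simp
  have "(\<lambda>k. hnorm ip (g k - y)) \<longlonglongrightarrow> 0"
    by (rule Lim_null_comparison[OF _ lim]) (intro always_eventually allI, simp add: hnorm_ge0 assms(2))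
  then show ?thesis unfolding hconv_def .
qed

lemma hconv_norm_tendsto: "hconv ip f x \<Longrightarrow> (\<lambda>k. hnorm ip (f k)) \<longlonglongrightarrow> hnorm ip x"
  unfolding hconv_def by (rule real_tendsto_bound[OF hnorm_rev])

lemma hconv_diff_const: assumes "hconv ip f x" shows "hconv ip (\<lambda>k. c - f k) (c - x)"
proof (rule hconv_bound[OF assms, where C=1])
  fix k
  have "hnorm ip (c - f k - (c - x)) = hnorm ip (-(f k - x))"
    by (rule arg_cong[where f="hnorm ip"]) (simp add: algebra_simps)
  also have "\<dots> = hnorm ip (f k - x)" by (rule hnorm_minus)
  finally show "hnorm ip (c - f k - (c - x)) \<le> 1 * hnorm ip (f k - x)" by simp
qed

lemma hconv_add_const: assumes "hconv ip f x" shows "hconv ip (\<lambda>k. f k + c) (x + c)"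
proof (rule hconv_bound[OF assms, where C=1])
  fix k
  have "hnorm ip (f k + c - (x + c)) = hnorm ip (f k - x)"
    by (rule arg_cong[where f="hnorm ip"]) (simp add: algebra_simps)
  then show "hnorm ip (f k + c - (x + c)) \<le> 1 * hnorm ip (f k - x)" by simp
qed

lemma hconv_ipR: "hconv ip f x \<Longrightarrow> (\<lambda>k. ip q (f k)) \<longlonglongrightarrow> ip q x"
proof -
  assume h: "hconv ip f x"
  have "(\<lambda>k. hnorm ip q * hnorm ip (f k - x)) \<longlonglongrightarrow> hnorm ip q * 0"
    using h unfolding hconv_def by (intro tendsto_mult tendsto_const)
  then have lim: "(\<lambda>k. hnorm ip q * hnorm ip (f k - x)) \<longlonglongrightarrow> 0" by simp
  show ?thesis
    by (rule cplx_tendsto_bound[OF _ lim]) (simp add: ip_diffR[symmetric] cauchy_schwarz)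
qed

lemma hconv_ipL: "hconv ip f x \<Longrightarrow> (\<lambda>k. ip (f k) q) \<longlonglongrightarrow> ip x q"
proof -
  assume "hconv ip f x"
  then have "(\<lambda>k. cnj (ip q (f k))) \<longlonglongrightarrow> cnj (ip q x)"
    by (intro tendsto_cnj hconv_ipR)
  moreover have "(\<lambda>k. ip (f k) q) = (\<lambda>k. cnj (ip q (f k)))" by (rule ext, rule ip_sym)
  moreover have "ip x q = cnj (ip q x)" by (rule ip_sym)
  ultimately show ?thesis by simp
qed

lemma hconv_unique: "hconv ip f x \<Longrightarrow> hconv ip f y \<Longrightarrow> x = y"
proof -
  assume a: "hconv ip f x" "hconv ip f y"
  have "(\<lambda>k. hnorm ip (f k - x) + hnorm ip (f k - y)) \<longlonglongrightarrow> 0 + 0"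
    using a unfolding hconv_def by (intro tendsto_add)
  moreover have "hnorm ip (x - y) \<le> hnorm ip (f k - x) + hnorm ip (f k - y)" for k
    using hnorm_triangle_diff[of x y "f k"] hnorm_commute[of x "f k"] by simp
  ultimately have "hnorm ip (x - y) \<le> 0"
    by (intro LIMSEQ_le_const) auto
  then show "x = y" using hnorm_ge0[of "x - y"] by simp
qed

lemma hclosure_closed: "closed_subspace sc ip L \<Longrightarrow> hclosure ip L = L"
proof
  assume "closed_subspace sc ip L"
  then show "hclosure ip L \<subseteq> L" unfolding closed_subspace_def hclosure_def by blast
next
  show "L \<subseteq> hclosure ip L"
  proof
    fix x assume "x \<in> L"
    moreover have "hconv ip (\<lambda>k. x) x" by (simp add: hconv_def)
    ultimately show "x \<in> hclosure ip L" unfolding hclosure_def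
      by (intro CollectI exI[of _ "\<lambda>k. x"]) simp
  qed
qed

lemma hnorm_sc2: "hnorm ip (sc 2 w) = 2 * hnorm ip w"
  by (simp add: hnorm_sc)

end

context hs begin

lemma projection:
  assumes M0: "0 \<in> M" and Madd: "\<And>x y. x\<in>M \<Longrightarrow> y\<in>M \<Longrightarrow> x+y\<in>M"
    and Msc: "\<And>a x. x\<in>M \<Longrightarrow> sc a x \<in> M"
  shows "\<exists>p \<in> hclosure ip M. \<forall>m\<in>M. ip (y - p) m = 0"
proof -
  define D where "D = (\<lambda>m. hnorm ip (y - m)) ` M"
  define d where "d = Inf D"
  have Dne: "D \<noteq> {}" using M0 by (auto simp: D_def)
  have Dbdd: "bdd_below D" unfolding bdd_below_def D_def by (auto intro!: exI[of _ 0] hnorm_ge0)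
  have d_le: "d \<le> hnorm ip (y - m)" if "m \<in> M" for m
  proof -
    have "hnorm ip (y - m) \<in> D" using that by (simp add: D_def)
    then show ?thesis unfolding d_def using Dbdd by (rule cInf_lower)
  qed
  have d0: "d \<ge> 0" unfolding d_def by (rule cInf_greatest[OF Dne]) (auto simp: D_def hnorm_ge0)
  have "\<forall>j::nat. \<exists>m. m \<in> M \<and> hnorm ip (y - m) < d + 1/real (Suc j)"
  proof
    fix j :: nat
    have "Inf D < d + 1/real (Suc j)" unfolding d_def by simp
    from cInf_lessD[OF Dne this] show "\<exists>m. m \<in> M \<and> hnorm ip (y - m) < d + 1/real (Suc j)"
      by (auto simp: D_def)
  qed
  then obtain mm where mmM: "\<And>j. mm j \<in> M" and mmd: "\<And>j. hnorm ip (y - mm j) < d + 1/real (Suc j)"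
    by metis
  define \<delta> where "\<delta> j = (2*d+1)/real (Suc j)" for j
  have sq: "(hnorm ip (y - mm j))^2 \<le> d^2 + \<delta> j" for j
  proof -
    define e where "e = 1/real (Suc j)"
    have e0: "0 < e" "e \<le> 1" by (auto simp: e_def)
    have "(hnorm ip (y - mm j))^2 \<le> (d + e)^2"
      using mmd[of j] hnorm_ge0[of "y - mm j"] by (intro power_mono) (auto simp: e_def)
    also have "\<dots> = d^2 + e * (2*d + e)" by (simp add: power2_eq_square algebra_simps)
    also have "\<dots> \<le> d^2 + e * (2*d+1)" using e0 by (intro add_left_mono mult_left_mono) auto
    finally show ?thesis by (simp add: \<delta>_def e_def)
  qed
  have dsq: "d^2 \<le> (hnorm ip (y - m))^2" if "m \<in> M" for m
    using d_le[OF that] d0 by (intro power_mono) auto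
  have para: "(hnorm ip (mm j - mm l))^2 \<le> 2*\<delta> j + 2*\<delta> l" for j l
  proof -
    define a where "a = y - mm j"
    define b where "b = y - mm l"
    define mid where "mid = sc (1/2) (mm j + mm l)"
    have midM: "mid \<in> M" unfolding mid_def by (intro Msc Madd mmM)
    have s2: "sc 2 w = w + w" for w
      using sc_addL[of 1 1 w] by simp
    have "sc 2 mid = mm j + mm l" unfolding mid_def by (simp add: sc_mult[symmetric])
    then have ab: "a + b = sc 2 (y - mid)" by (simp add: sc_diffR s2 a_def b_def)
    have "Re (ip (a+b) (a+b)) = 4 * (hnorm ip (y - mid))^2"
      by (simp add: ab hnorm_sq[symmetric] hnorm_sc2 power_mult_distrib)
    moreover have "Re (ip (a-b) (a-b)) + Re (ip (a+b) (a+b)) = 2 * Re (ip a a) + 2 * Re (ip b b)"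
      by (simp add: Re_expand_add Re_expand_diff)
    moreover have "a - b = mm l - mm j" by (simp add: a_def b_def)
    ultimately have "(hnorm ip (mm j - mm l))^2 = 2 * (hnorm ip a)^2 + 2 * (hnorm ip b)^2 - 4 * (hnorm ip (y - mid))^2"
      by (simp add: hnorm_sq[symmetric] hnorm_commute[of "mm j"])
    also have "\<dots> \<le> 2 * (d^2 + \<delta> j) + 2 * (d^2 + \<delta> l) - 4 * d^2"
      using sq[of j] sq[of l] dsq[OF midM] unfolding a_def b_def
      by (intro diff_mono add_mono mult_left_mono) auto
    finally show ?thesis by simp
  qed
  have cauchy: "hcauchy ip mm"
    unfolding hcauchy_def
  proof (intro allI impI)
    fix e :: real assume e: "e > 0"
    obtain N :: nat where N: "4*(2*d+1)/e^2 < real N" using reals_Archimedean2 by blast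
    have "\<forall>j\<ge>N. \<forall>l\<ge>N. hnorm ip (mm j - mm l) < e"
    proof (intro allI impI)
      fix j l assume jl: "j \<ge> N" "l \<ge> N"
      have dj: "\<delta> k \<le> (2*d+1)/real (Suc N)" if "k \<ge> N" for k
        unfolding \<delta>_def using that d0 by (intro divide_left_mono) auto
      have "4*(2*d+1) < e^2 * real N" using N e by (simp add: field_simps)
      also have "\<dots> \<le> e^2 * real (Suc N)" by (intro mult_left_mono) auto
      finally have "4*(2*d+1) < e^2 * real (Suc N)" .
      then have "4*((2*d+1)/real (Suc N)) < e^2" by (simp add: field_simps)
      then have "(hnorm ip (mm j - mm l))^2 < e^2"
        using para[of j l] dj[OF jl(1)] dj[OF jl(2)] by linarith
      then show "hnorm ip (mm j - mm l) < e" by (rule power2_less_imp_less) (use e in auto)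
    qed
    then show "\<exists>N. \<forall>m\<ge>N. \<forall>k\<ge>N. hnorm ip (mm m - mm k) < e" by blast
  qed
  obtain p where p: "hconv ip mm p" using complete[OF cauchy] by blast
  have pM: "p \<in> hclosure ip M" using mmM p by (auto simp: hclosure_def)
  have pd: "(hnorm ip (y - p))^2 = d^2"
  proof -
    have lim1: "(\<lambda>j. (hnorm ip (y - mm j))^2) \<longlonglongrightarrow> (hnorm ip (y-p))^2"
      by (intro tendsto_power hconv_norm_tendsto hconv_diff_const p)
    have "\<delta> \<longlonglongrightarrow> 0"
    proof -
      have "(\<lambda>n. (2*d+1) / real n) \<longlonglongrightarrow> 0" by (rule lim_const_over_n)
      then show ?thesis unfolding \<delta>_def by (rule LIMSEQ_Suc)
    qed
    then have "(\<lambda>j. d^2 + \<delta> j) \<longlonglongrightarrow> d^2 + 0" by (intro tendsto_add tendsto_const)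
    then have lim3: "(\<lambda>j. d^2 + \<delta> j) \<longlonglongrightarrow> d^2" by simp
    have lim2: "(\<lambda>j. (hnorm ip (y - mm j))^2) \<longlonglongrightarrow> d^2"
      by (rule tendsto_sandwich[where f="\<lambda>j. d^2" and h="\<lambda>j. d^2 + \<delta> j"])
         (auto intro!: always_eventually dsq mmM sq lim3)
    show ?thesis using LIMSEQ_unique[OF lim1 lim2] .
  qed
  have var: "d^2 \<le> (hnorm ip (y - p - sc t m))^2" if mM: "m \<in> M" for m t
  proof -
    have "hconv ip (\<lambda>j. y - (mm j + sc t m)) (y - (p + sc t m))"
      by (intro hconv_diff_const hconv_add_const p)
    then have "(\<lambda>j. hnorm ip (y - (mm j + sc t m))) \<longlonglongrightarrow> hnorm ip (y - (p + sc t m))"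
      by (rule hconv_norm_tendsto)
    moreover have "\<And>j. d \<le> hnorm ip (y - (mm j + sc t m))"
      by (intro d_le Madd mmM Msc mM)
    ultimately have "d \<le> hnorm ip (y - (p + sc t m))" by (intro LIMSEQ_le_const) auto
    then show ?thesis using d0 by (simp add: diff_diff_eq power_mono)
  qed
  show ?thesis
  proof (intro bexI[OF _ pM] ballI)
    fix m assume mM: "m \<in> M"
    define u where "u = y - p"
    define c where "c = ip u m"
    define nm where "nm = (hnorm ip m)^2"
    define s where "s = 1 / (nm + 1)"
    have nm0: "nm \<ge> 0" by (simp add: nm_def)
    have s0: "s > 0" using nm0 by (simp add: s_def)
    define t where "t = complex_of_real s * c"
    have i1: "ip u (sc t m) = complex_of_real (s * (cmod c)^2)"
      by (simp add: ip_scR t_def c_def[symmetric] complex_mult_cnj cmod_power2 mult.commute)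
    have i2: "Re (ip (sc t m) (sc t m)) = s^2 * (cmod c)^2 * nm"
    proof -
      have "cmod t = s * cmod c" using s0 by (simp add: t_def norm_mult)
      then show ?thesis by (simp add: hnorm_sq[symmetric] hnorm_sc power_mult_distrib nm_def)
    qed
    have ru: "Re (ip u u) = d^2" using pd unfolding u_def[symmetric] by (simp add: hnorm_sq)
    have "d^2 \<le> Re (ip (u - sc t m) (u - sc t m))"
      using var[OF mM, of t] by (simp add: hnorm_sq u_def)
    also have "\<dots> = d^2 - 2 * (s * (cmod c)^2) + s^2 * (cmod c)^2 * nm"
      using ru by (simp add: Re_expand_diff i1 i2)
    finally have "2 * (s * (cmod c)^2) \<le> s * ((cmod c)^2 * (s * nm))"
      by (simp add: power2_eq_square algebra_simps)
    then have A: "2 * (cmod c)^2 \<le> (cmod c)^2 * (s * nm)" using s0 by simp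
    have "s * nm < 1" using nm0 by (simp add: s_def)
    then have "(cmod c)^2 * (s * nm) \<le> (cmod c)^2" by (intro mult_left_le) auto
    with A have "(cmod c)^2 \<le> 0" by linarith
    then show "ip (y - p) m = 0" by (simp add: c_def u_def)
  qed
qed

end

context hs begin

lemma Re_le0_zero: "Re (ip d d) \<le> 0 \<Longrightarrow> d = 0"
proof -
  assume "Re (ip d d) \<le> 0"
  then have "Re (ip d d) = 0" using ip_self_Re[of d] by linarith
  then have "ip d d = 0" by (simp add: complex_eq_iff)
  then show "d = 0" by (rule ip_self_0)
qed

lemma ip_ext: "(\<And>z. ip z a = ip z b) \<Longrightarrow> a = b"
proof -
  assume h: "\<And>z. ip z a = ip z b"
  have "ip (a - b) (a - b) = 0" by (simp add: ip_diffR h)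
  then have "a - b = 0" by (rule ip_self_0)
  then show "a = b" by simp
qed

lemma ip_sumL: "ip (\<Sum>i\<in>S. f i) y = (\<Sum>i\<in>S. ip (f i) y)"
proof (induction S rule: infinite_finite_induct)
  case (insert x F) then show ?case by (simp add: ip_addL)
qed simp_all

lemma sc_sum: "sc a (\<Sum>i\<in>S. f i) = (\<Sum>i\<in>S. sc a (f i))"
proof (induction S rule: infinite_finite_induct)
  case (insert x F) then show ?case by (simp add: sc_addR)
qed simp_all

lemma sc_neg1: "sc (-1) x = - x"
proof -
  have "x + sc (-1) x = sc 1 x + sc (-1) x" by simp
  also have "\<dots> = sc (1 + -1) x" by (rule sc_addL[symmetric])
  also have "\<dots> = 0" by simp
  finally have "x + sc (-1) x = 0" .
  from minus_unique[OF this] show ?thesis by (rule sym)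
qed

lemma closed_subspace_diff: "closed_subspace sc ip L \<Longrightarrow> x \<in> L \<Longrightarrow> y \<in> L \<Longrightarrow> x - y \<in> L"
proof -
  assume L: "closed_subspace sc ip L" and xy: "x \<in> L" "y \<in> L"
  have "sc (-1) y \<in> L" using L xy unfolding closed_subspace_def by blast
  then have "x + sc (-1) y \<in> L" using L xy unfolding closed_subspace_def by blast
  then show ?thesis by (simp add: sc_neg1)
qed

end

locale ops = hs +
  fixes V W :: "'h::ab_group_add \<Rightarrow> 'h"
  assumes iso: "isometry sc ip V" and adj: "is_adjoint ip V W"
begin

lemma V_add: "V (x + y) = V x + V y" using iso unfolding isometry_def hlinear_def by blast
lemma V_sc: "V (sc a x) = sc a (V x)" using iso unfolding isometry_def hlinear_def by blast
lemma V_norm: "hnorm ip (V x) = hnorm ip x" using iso unfolding isometry_def by blast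
lemma adjR: "ip (V x) y = ip x (W y)" using adj unfolding is_adjoint_def by blast
lemma adjL: "ip (W y) x = ip y (V x)"
  using ip_sym[of "W y" x] adjR[of x y] ip_sym[of y "V x"] by simp

lemma V_0[simp]: "V 0 = 0"
proof -
  have "V 0 = V (sc 0 0)" by simp
  also have "\<dots> = sc 0 (V 0)" by (rule V_sc)
  finally show ?thesis by simp
qed
lemma V_minus: "V (- x) = - V x"
proof -
  have "V x + V (-x) = V (x + -x)" by (rule V_add[symmetric])
  also have "\<dots> = 0" by simp
  finally have "V x + V (-x) = 0" .
  from minus_unique[OF this] show ?thesis by (rule sym)
qed
lemma V_diff: "V (x - y) = V x - V y"
  by (simp only: diff_conv_add_uminus V_add V_minus)

lemma W_add: "W (x + y) = W x + W y"
  by (rule ip_ext) (simp add: ip_addR adjR[symmetric])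
lemma W_sc: "W (sc a x) = sc a (W x)"
  by (rule ip_ext) (simp add: ip_scR adjR[symmetric])
lemma W_0[simp]: "W 0 = 0"
proof -
  have "W 0 = W (sc 0 0)" by simp
  also have "\<dots> = sc 0 (W 0)" by (rule W_sc)
  finally show ?thesis by simp
qed
lemma W_minus: "W (- x) = - W x"
proof -
  have "W x + W (-x) = W (x + -x)" by (rule W_add[symmetric])
  also have "\<dots> = 0" by simp
  finally have "W x + W (-x) = 0" .
  from minus_unique[OF this] show ?thesis by (rule sym)
qed
lemma W_diff: "W (x - y) = W x - W y"
  by (simp only: diff_conv_add_uminus W_add W_minus)

lemma ipV: "ip (V x) (V x) = ip x x"
proof -
  have "(hnorm ip (V x))^2 = (hnorm ip x)^2" by (simp add: V_norm)
  then have "Re (ip (V x) (V x)) = Re (ip x x)" by (simp add: hnorm_sq)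
  then show ?thesis by (simp add: complex_eq_iff)
qed

lemma W_contr_sq: "Re (ip (W x) (W x)) \<le> Re (ip x x)"
proof -
  have r1: "Re (ip x (V (W x))) = Re (ip (W x) (W x))"
    using ip_sym[of x "V (W x)"] adjR[of "W x" x] by simp
  have "0 \<le> Re (ip (x - V (W x)) (x - V (W x)))" by (rule ip_self_Re)
  also have "\<dots> = Re (ip x x) - Re (ip (W x) (W x))" by (simp add: Re_expand_diff r1 ipV)
  finally show ?thesis by simp
qed

lemma W_contr: "hnorm ip (W x) \<le> hnorm ip x"
  unfolding hnorm_def by (rule real_sqrt_le_mono) (rule W_contr_sq)

lemma WV[simp]: "W (V x) = x"
proof -
  have r1: "Re (ip (W (V x)) x) = Re (ip x x)" by (simp add: adjL ipV)
  have "Re (ip (W (V x) - x) (W (V x) - x)) = Re (ip (W (V x)) (W (V x))) - Re (ip x x)"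
    by (simp add: Re_expand_diff r1)
  also have "\<dots> \<le> Re (ip (V x) (V x)) - Re (ip x x)" using W_contr_sq[of "V x"] by simp
  also have "\<dots> = 0" by (simp add: ipV)
  finally have "W (V x) - x = 0" by (rule Re_le0_zero)
  then show ?thesis by simp
qed

lemma ipVV: "ip (V x) (V y) = ip x y" by (simp add: adjR)

lemma V_inj: "V x = V y \<Longrightarrow> x = y"
proof -
  assume "V x = V y"
  then have "W (V x) = W (V y)" by (rule arg_cong)
  then show "x = y" by (simp only: WV)
qed

lemma Vk_add: "(V^^k) (x + y) = (V^^k) x + (V^^k) y"
  by (induction k) (simp_all add: V_add)
lemma Vk_sc: "(V^^k) (sc a x) = sc a ((V^^k) x)"
  by (induction k) (simp_all add: V_sc)
lemma Vk_0[simp]: "(V^^k) 0 = 0"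
  by (induction k) simp_all
lemma Vk_diff: "(V^^k) (x - y) = (V^^k) x - (V^^k) y"
  by (induction k) (simp_all add: V_diff)
lemma Vk_norm: "hnorm ip ((V^^k) x) = hnorm ip x"
  by (induction k) (simp_all add: V_norm)
lemma ipVk: "ip ((V^^k) x) ((V^^k) y) = ip x y"
  by (induction k) (simp_all add: ipVV)
lemma Wk_add: "(W^^k) (x + y) = (W^^k) x + (W^^k) y"
  by (induction k) (simp_all add: W_add)
lemma Wk_sc: "(W^^k) (sc a x) = sc a ((W^^k) x)"
  by (induction k) (simp_all add: W_sc)
lemma Wk_0[simp]: "(W^^k) 0 = 0"
  by (induction k) simp_all
lemma Wk_diff: "(W^^k) (x - y) = (W^^k) x - (W^^k) y"
  by (induction k) (simp_all add: W_diff)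
lemma Wk_contr: "hnorm ip ((W^^k) x) \<le> hnorm ip x"
proof (induction k)
  case (Suc k) then show ?case using W_contr[of "(W^^k) x"] by simp
qed simp
lemma Wk_Suc: "(W^^Suc k) y = (W^^k) (W y)"
  by (simp only: funpow_Suc_right comp_apply)
lemma Vk_Suc: "(V^^Suc k) y = (V^^k) (V y)"
  by (simp only: funpow_Suc_right comp_apply)
lemma WkVk[simp]: "(W^^k) ((V^^k) x) = x"
proof (induction k arbitrary: x)
  case (Suc k)
  have "(W^^Suc k) ((V^^Suc k) x) = (W^^k) (W ((V^^Suc k) x))" by (rule Wk_Suc)
  also have "\<dots> = (W^^k) ((V^^k) x)" by simp
  also have "\<dots> = x" by (rule Suc.IH)
  finally show ?case .
qed simp

definition Tk :: "nat \<Rightarrow> 'h \<Rightarrow> 'h" where "Tk k x = (V^^k) ((W^^k) x)"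

lemma T_0[simp]: "Tk 0 x = x" by (simp add: Tk_def)
lemma T_zero[simp]: "Tk k 0 = 0" by (simp add: Tk_def)
lemma T_add: "Tk k (x + y) = Tk k x + Tk k y" by (simp add: Tk_def Vk_add Wk_add)
lemma T_sc: "Tk k (sc a x) = sc a (Tk k x)" by (simp add: Tk_def Vk_sc Wk_sc)
lemma T_diff: "Tk k (x - y) = Tk k x - Tk k y" by (simp add: Tk_def Vk_diff Wk_diff)
lemma T_contr: "hnorm ip (Tk k x) \<le> hnorm ip x" by (simp add: Tk_def Vk_norm Wk_contr)
lemma T_Suc: "Tk (Suc k) y = V (Tk k (W y))"
  by (simp add: Tk_def Wk_Suc[of k y, symmetric])
lemma T_V: assumes "\<forall>k. Tk k y = y" shows "Tk k (V y) = V y"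
proof (cases k)
  case (Suc k') then show ?thesis using assms by (simp add: T_Suc)
qed simp

lemma hconv_T: assumes "hconv ip f x" shows "hconv ip (\<lambda>j. Tk k (f j)) (Tk k x)"
proof (rule hconv_bound[OF assms, where C=1])
  fix j
  have "hnorm ip (Tk k (f j) - Tk k x) = hnorm ip (Tk k (f j - x))" by (simp only: T_diff)
  also have "\<dots> \<le> hnorm ip (f j - x)" by (rule T_contr)
  finally show "hnorm ip (Tk k (f j) - Tk k x) \<le> 1 * hnorm ip (f j - x)" by simp
qed

end

context ops begin

lemma pure_orth:
  assumes L: "closed_subspace sc ip L" and VL: "V ` L \<subseteq> L" and WL: "W ` L \<subseteq> L"
    and pure: "pure_on sc ip V L" and u: "\<forall>k. Tk k u = u" and l: "l \<in> L"
  shows "ip u l = 0"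
proof -
  have L0: "0 \<in> L" and Ladd: "\<And>x y. x \<in> L \<Longrightarrow> y \<in> L \<Longrightarrow> x + y \<in> L"
    and Lsc: "\<And>a x. x \<in> L \<Longrightarrow> sc a x \<in> L"
    and Llim: "\<And>f x. (\<forall>k. f k \<in> L) \<Longrightarrow> hconv ip f x \<Longrightarrow> x \<in> L"
    using L unfolding closed_subspace_def by blast+
  obtain p where pL: "p \<in> L" and po: "\<forall>l\<in>L. ip (u - p) l = 0"
    using projection[of L u] L0 Ladd Lsc hclosure_closed[OF L] by blast
  define P where "P x q \<longleftrightarrow> q \<in> L \<and> (\<forall>l\<in>L. ip (x - q) l = 0)" for x q
  have PV: "P (V x) (V q)" if "P x q" for x q
  proof -
    have "V q \<in> L" using that VL unfolding P_def by blast
    moreover have "ip (V x - V q) l = 0" if "l \<in> L" for l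
    proof -
      have "ip (V x - V q) l = ip (x - q) (W l)" by (simp add: V_diff[symmetric] adjR)
      also have "\<dots> = 0" using \<open>P x q\<close> WL that unfolding P_def by blast
      finally show ?thesis .
    qed
    ultimately show ?thesis unfolding P_def by blast
  qed
  have PW: "P (W x) (W q)" if "P x q" for x q
  proof -
    have "W q \<in> L" using that WL unfolding P_def by blast
    moreover have "ip (W x - W q) l = 0" if "l \<in> L" for l
    proof -
      have "ip (W x - W q) l = ip (x - q) (V l)" by (simp add: W_diff[symmetric] adjL)
      also have "\<dots> = 0" using \<open>P x q\<close> VL that unfolding P_def by blast
      finally show ?thesis .
    qed
    ultimately show ?thesis unfolding P_def by blast
  qed
  have PWk: "P ((W^^k) x) ((W^^k) q)" if "P x q" for k x q
    using that by (induction k) (simp_all add: PW)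
  have PVk: "P ((V^^k) x) ((V^^k) q)" if "P x q" for k x q
    using that by (induction k) (simp_all add: PV)
  have PT: "P (Tk k x) (Tk k q)" if "P x q" for k x q
    unfolding Tk_def using that by (intro PVk PWk)
  have Puniq: "q1 = q2" if "P x q1" "P x q2" for x q1 q2
  proof -
    have d: "q2 - q1 \<in> L" using that L closed_subspace_diff unfolding P_def by blast
    have "ip (q2 - q1) (q2 - q1) = ip (x - q1) (q2 - q1) - ip (x - q2) (q2 - q1)"
      by (simp add: ip_diffL[symmetric])
    also have "\<dots> = 0" using that d unfolding P_def by simp
    finally have "q2 - q1 = 0" by (rule ip_self_0)
    then show ?thesis by simp
  qed
  have Pup: "P u p" unfolding P_def using pL po by blast
  have pT: "Tk k p = p" for k
  proof -
    have "P (Tk k u) (Tk k p)" by (rule PT[OF Pup])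
    then have "P u (Tk k p)" using u by simp
    then show ?thesis using Pup by (rule Puniq)
  qed
  define K where "K = {y \<in> L. \<forall>k. Tk k y = y}"
  have KL: "K \<subseteq> L" unfolding K_def by blast
  have Kcs: "closed_subspace sc ip K"
    unfolding closed_subspace_def
  proof (intro conjI allI ballI impI)
    show "0 \<in> K" unfolding K_def using L0 by simp
  next
    fix x y assume "x \<in> K" "y \<in> K"
    then show "x + y \<in> K" unfolding K_def by (simp add: Ladd T_add)
  next
    fix a x assume "x \<in> K"
    then show "sc a x \<in> K" unfolding K_def by (simp add: Lsc T_sc)
  next
    fix f x assume h: "(\<forall>k. f k \<in> K) \<and> hconv ip f x"
    then have fL: "\<forall>k. f k \<in> L" and fT: "\<And>k j. Tk k (f j) = f j" and fx: "hconv ip f x"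
      unfolding K_def by auto
    have "x \<in> L" by (rule Llim[OF fL fx])
    moreover have "Tk k x = x" for k
    proof -
      have "hconv ip (\<lambda>j. Tk k (f j)) (Tk k x)" by (rule hconv_T[OF fx])
      then have "hconv ip f (Tk k x)" by (simp add: fT)
      then show ?thesis using fx by (rule hconv_unique)
    qed
    ultimately show "x \<in> K" unfolding K_def by blast
  qed
  have VK: "V ` K \<subseteq> K"
  proof
    fix z assume "z \<in> V ` K"
    then obtain y where y: "y \<in> K" and z: "z = V y" by blast
    have "V y \<in> L" using y VL KL by blast
    moreover have "\<forall>k. Tk k y = y" using y unfolding K_def by blast
    then have "Tk k (V y) = V y" for k by (rule T_V)
    ultimately show "z \<in> K" unfolding K_def z by blast
  qed
  have KV: "K \<subseteq> V ` K"
  proof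
    fix y assume y: "y \<in> K"
    then have yT: "\<And>k. Tk k y = y" and yL: "y \<in> L" unfolding K_def by auto
    have y1: "V (W y) = y" using yT[of 1] by (simp add: Tk_def)
    have "W y \<in> L" using yL WL by blast
    moreover have "Tk k (W y) = W y" for k
    proof (rule V_inj)
      have "V (Tk k (W y)) = Tk (Suc k) y" by (simp add: T_Suc)
      also have "\<dots> = y" by (rule yT)
      also have "\<dots> = V (W y)" by (rule y1[symmetric])
      finally show "V (Tk k (W y)) = V (W y)" .
    qed
    ultimately have "W y \<in> K" unfolding K_def by blast
    then show "y \<in> V ` K" using y1 by (metis image_eqI)
  qed
  have "K = {0}" using pure Kcs KL VK KV unfolding pure_on_def unitary_on_def by blast
  moreover have "p \<in> K" unfolding K_def using pL pT by blast
  ultimately have "p = 0" by blast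
  then show ?thesis using po l by simp
qed

lemma unitary_T: assumes "V ` L = L" shows "y \<in> L \<Longrightarrow> Tk k y = y"
proof (induction k arbitrary: y)
  case (Suc k)
  then obtain y' where y': "y' \<in> L" "y = V y'" using assms by blast
  have "Tk (Suc k) y = V (Tk k (W y))" by (rule T_Suc)
  also have "\<dots> = V (Tk k y')" using y' by simp
  also have "\<dots> = V y'" using Suc.IH[OF y'(1)] by simp
  finally show ?case using y' by simp
qed simp

lemma unitary_Huni: assumes "V ` L = L" shows "L \<subseteq> H_uni V"
proof
  fix y assume y: "y \<in> L"
  have "y \<in> (V^^k) ` UNIV" for k
  proof -
    have "y = (V^^k) ((W^^k) y)" using unitary_T[OF assms y, of k] by (simp add: Tk_def)
    then show ?thesis by blast
  qed
  then show "y \<in> H_uni V" unfolding H_uni_def by blast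
qed

lemma uni_T: "y \<in> H_uni V \<Longrightarrow> Tk k y = y"
proof -
  assume "y \<in> H_uni V"
  then have "y \<in> (V^^k) ` UNIV" unfolding H_uni_def by blast
  then obtain z where "y = (V^^k) z" by blast
  then show ?thesis by (simp add: Tk_def)
qed

end

context ops begin

definition Mset :: "'h set" where
  "Mset = {x. \<exists>N g. (\<forall>k<N. g k \<in> (V ^^ k) ` {y. W y = 0}) \<and> x = (\<Sum>k<N. g k)}"

lemma Hiso_eq: "H_iso ip V W = hclosure ip Mset"
  unfolding H_iso_def Mset_def ..

lemma V_sum: "V (\<Sum>i\<in>S. f i) = (\<Sum>i\<in>S. V (f i))"
proof (induction S rule: infinite_finite_induct)
  case (insert x F) then show ?case by (simp add: V_add)
qed simp_all

lemma Sk0: "0 \<in> (V ^^ k) ` {y. W y = 0}"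
  by (rule image_eqI[of _ _ 0]) simp_all

lemma Skadd: "a \<in> (V ^^ k) ` {y. W y = 0} \<Longrightarrow> b \<in> (V ^^ k) ` {y. W y = 0} \<Longrightarrow> a + b \<in> (V ^^ k) ` {y. W y = 0}"
proof -
  assume "a \<in> (V ^^ k) ` {y. W y = 0}" "b \<in> (V ^^ k) ` {y. W y = 0}"
  then obtain wa wb where "W wa = 0" "W wb = 0" "a = (V^^k) wa" "b = (V^^k) wb" by blast
  then show ?thesis by (intro image_eqI[of _ _ "wa + wb"]) (simp_all add: Vk_add W_add)
qed

lemma Sksc: "a \<in> (V ^^ k) ` {y. W y = 0} \<Longrightarrow> sc c a \<in> (V ^^ k) ` {y. W y = 0}"
proof -
  assume "a \<in> (V ^^ k) ` {y. W y = 0}"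
  then obtain wa where "W wa = 0" "a = (V^^k) wa" by blast
  then show ?thesis by (intro image_eqI[of _ _ "sc c wa"]) (simp_all add: Vk_sc W_sc)
qed

lemma M0: "0 \<in> Mset"
  unfolding Mset_def by (intro CollectI exI[of _ 0]) simp

lemma Mker: "W w = 0 \<Longrightarrow> w \<in> Mset"
  unfolding Mset_def by (intro CollectI exI[of _ 1] exI[of _ "\<lambda>k. w"]) auto

lemma sum_if_less: "(N1::nat) \<le> N \<Longrightarrow> (\<Sum>k<N. if k < N1 then g k else (0::'h)) = (\<Sum>k<N1. g k)"
proof -
  assume "N1 \<le> N"
  have "sum g ({..<N} \<inter> {k. k < N1}) = (\<Sum>k<N. if k \<in> {k. k < N1} then g k else 0)"
    by (rule sum.inter_restrict) simp
  then have "(\<Sum>k<N. if k < N1 then g k else (0::'h)) = (\<Sum>k\<in>{..<N} \<inter> {k. k < N1}. g k)"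
    by simp
  also have "{..<N} \<inter> {k. k < N1} = {..<N1}" using \<open>N1 \<le> N\<close> by auto
  finally show ?thesis .
qed

lemma Madd: "x \<in> Mset \<Longrightarrow> y \<in> Mset \<Longrightarrow> x + y \<in> Mset"
proof -
  assume "x \<in> Mset" "y \<in> Mset"
  then obtain N1 g1 N2 g2 where g1: "\<forall>k<N1. g1 k \<in> (V ^^ k) ` {y. W y = 0}" and x: "x = (\<Sum>k<N1. g1 k)"
    and g2: "\<forall>k<N2. g2 k \<in> (V ^^ k) ` {y. W y = 0}" and y: "y = (\<Sum>k<N2. g2 k)"
    unfolding Mset_def by blast
  define g where "g k = (if k < N1 then g1 k else 0) + (if k < N2 then g2 k else 0)" for k
  have "\<forall>k<N1+N2. g k \<in> (V ^^ k) ` {y. W y = 0}"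
    using g1 g2 by (auto simp: g_def intro!: Skadd Sk0)
  moreover have "x + y = (\<Sum>k<N1+N2. g k)"
    unfolding g_def sum.distrib x y by (simp add: sum_if_less)
  ultimately show ?thesis unfolding Mset_def by blast
qed

lemma Msc: "x \<in> Mset \<Longrightarrow> sc a x \<in> Mset"
proof -
  assume "x \<in> Mset"
  then obtain N g where g: "\<forall>k<N. g k \<in> (V ^^ k) ` {y. W y = 0}" and x: "x = (\<Sum>k<N. g k)"
    unfolding Mset_def by blast
  define g' where "g' k = sc a (g k)" for k
  have "\<forall>k<N. g' k \<in> (V ^^ k) ` {y. W y = 0}" using g by (auto simp: g'_def intro: Sksc)
  moreover have "sc a x = (\<Sum>k<N. g' k)" unfolding x g'_def by (rule sc_sum)
  ultimately show ?thesis unfolding Mset_def by blast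
qed

lemma MV: "x \<in> Mset \<Longrightarrow> V x \<in> Mset"
proof -
  assume "x \<in> Mset"
  then obtain N g where g: "\<forall>k<N. g k \<in> (V ^^ k) ` {y. W y = 0}" and x: "x = (\<Sum>k<N. g k)"
    unfolding Mset_def by blast
  define g' where "g' k = (case k of 0 \<Rightarrow> 0 | Suc j \<Rightarrow> V (g j))" for k
  have "\<forall>k<Suc N. g' k \<in> (V ^^ k) ` {y. W y = 0}"
  proof (intro allI impI)
    fix k assume k: "k < Suc N"
    show "g' k \<in> (V ^^ k) ` {y. W y = 0}"
    proof (cases k)
      case 0 then show ?thesis by (simp add: g'_def Sk0)
    next
      case (Suc j)
      then have "j < N" using k by simp
      then obtain w where "W w = 0" "g j = (V^^j) w" using g by blast
      then show ?thesis using Suc by (intro image_eqI[of _ _ w]) (simp_all add: g'_def)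
    qed
  qed
  moreover have "V x = (\<Sum>k<Suc N. g' k)"
    unfolding sum.lessThan_Suc_shift by (simp add: g'_def x V_sum)
  ultimately show ?thesis unfolding Mset_def by blast
qed

lemma hclosure_orth: "p \<in> hclosure ip Mset \<Longrightarrow> \<forall>m\<in>Mset. ip q m = 0 \<Longrightarrow> ip q p = 0"
proof -
  assume p: "p \<in> hclosure ip Mset" and qo: "\<forall>m\<in>Mset. ip q m = 0"
  then obtain f where fM: "\<forall>k. f k \<in> Mset" and fp: "hconv ip f p" unfolding hclosure_def by blast
  have "(\<lambda>j. ip q (f j)) \<longlonglongrightarrow> ip q p" by (rule hconv_ipR[OF fp])
  moreover have "(\<lambda>j. ip q (f j)) = (\<lambda>j. 0)" using fM qo by auto
  ultimately have "(\<lambda>j. (0::complex)) \<longlonglongrightarrow> ip q p" by simp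
  then show "ip q p = 0" using LIMSEQ_unique tendsto_const by blast
qed

lemma pure_Hiso:
  assumes L: "closed_subspace sc ip L" and VL: "V ` L \<subseteq> L" and WL: "W ` L \<subseteq> L"
    and pure: "pure_on sc ip V L" and y: "y \<in> L"
  shows "y \<in> H_iso ip V W"
proof -
  obtain p where pM: "p \<in> hclosure ip Mset" and po: "\<forall>m\<in>Mset. ip (y - p) m = 0"
    using projection[of Mset y] M0 Madd Msc by blast
  define q where "q = y - p"
  have orthT: "\<forall>q. (\<forall>m\<in>Mset. ip q m = 0) \<longrightarrow> Tk k q = q" for k
  proof (induction k)
    case (Suc k)
    show ?case
    proof (intro allI impI)
      fix q assume qo: "\<forall>m\<in>Mset. ip q m = 0"
      have Wqo: "\<forall>m\<in>Mset. ip (W q) m = 0"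
      proof
        fix m assume "m \<in> Mset"
        then have "V m \<in> Mset" by (rule MV)
        then show "ip (W q) m = 0" using qo by (simp add: adjL)
      qed
      define d where "d = q - V (W q)"
      have Wd: "W d = 0" by (simp add: d_def W_diff)
      then have dM: "d \<in> Mset" by (rule Mker)
      have "ip d d = ip q d - ip (V (W q)) d" by (simp add: d_def ip_diffL)
      also have "\<dots> = 0" using qo dM by (simp add: adjR Wd)
      finally have "d = 0" by (rule ip_self_0)
      then have qVW: "V (W q) = q" by (simp add: d_def)
      have "Tk (Suc k) q = V (Tk k (W q))" by (rule T_Suc)
      also have "\<dots> = V (W q)" using Suc.IH Wqo by simp
      also have "\<dots> = q" by (rule qVW)
      finally show "Tk (Suc k) q = q" .
    qed
  qed simp
  have qT: "\<forall>k. Tk k q = q" using orthT po unfolding q_def by blast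
  have q1: "ip q y = 0" by (rule pure_orth[OF L VL WL pure qT y])
  have q2: "ip q p = 0" by (rule hclosure_orth[OF pM]) (use po q_def in simp)
  have "ip q q = ip q y - ip q p" by (simp add: q_def ip_diffR)
  also have "\<dots> = 0" by (simp add: q1 q2)
  finally have "q = 0" by (rule ip_self_0)
  then have "y = p" by (simp add: q_def)
  then show ?thesis using pM by (simp add: Hiso_eq)
qed

lemma Hiso_orth:
  assumes x: "x \<in> H_iso ip V W" and u: "\<forall>k. Tk k u = u"
  shows "ip x u = 0"
proof -
  have Sorth: "ip g u = 0" if gin: "g \<in> (V ^^ k) ` {y. W y = 0}" for g k
  proof -
    obtain w where w: "W w = 0" "g = (V^^k) w" using gin by blast
    define c where "c = (W^^Suc k) u"
    have "u = Tk (Suc k) u" using u by simp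
    also have "\<dots> = (V^^k) (V c)" unfolding Tk_def c_def by (rule Vk_Suc)
    finally have uc: "u = (V^^k) (V c)" .
    have "ip g u = ip w (V c)" by (simp add: w(2) uc ipVk)
    also have "\<dots> = cnj (ip (V c) w)" by (rule ip_sym)
    also have "\<dots> = 0" by (simp add: adjR w(1))
    finally show ?thesis .
  qed
  have Morth: "ip m u = 0" if mM: "m \<in> Mset" for m
  proof -
    obtain N g where g: "\<forall>k<N. g k \<in> (V ^^ k) ` {y. W y = 0}" and m: "m = (\<Sum>k<N. g k)"
      using mM unfolding Mset_def by blast
    have "ip m u = (\<Sum>k<N. ip (g k) u)" unfolding m by (rule ip_sumL)
    also have "\<dots> = 0" using g by (intro sum.neutral ballI Sorth) auto
    finally show ?thesis .
  qed
  obtain f where fM: "\<forall>k. f k \<in> Mset" and fp: "hconv ip f x"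
    using x unfolding Hiso_eq hclosure_def by blast
  have "(\<lambda>j. ip (f j) u) \<longlonglongrightarrow> ip x u" by (rule hconv_ipL[OF fp])
  moreover have "(\<lambda>j. ip (f j) u) = (\<lambda>j. 0)" using fM Morth by auto
  ultimately have "(\<lambda>j. (0::complex)) \<longlonglongrightarrow> ip x u" by simp
  then show "ip x u = 0" using LIMSEQ_unique tendsto_const by blast
qed

end

context ops begin

lemma orth_core:
  assumes "reducing sc ip V W L1" "pure_on sc ip V L1" "unitary_on V L2" "x \<in> L1" "y \<in> L2"
  shows "ip y x = 0"
proof -
  have L1: "closed_subspace sc ip L1" "V ` L1 \<subseteq> L1" "W ` L1 \<subseteq> L1"
    using assms(1) unfolding reducing_def by blast+
  have "\<forall>k. Tk k y = y" using unitary_T[of L2 y] assms(3,5) unfolding unitary_on_def by blast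
  then show ?thesis by (rule pure_orth[OF L1 assms(2) _ assms(4)])
qed

lemma HA_core1: "x \<in> H_iso ip V W \<Longrightarrow> unitary_on V L \<Longrightarrow> y \<in> L \<Longrightarrow> ip x y = 0"
proof -
  assume x: "x \<in> H_iso ip V W" and u: "unitary_on V L" and y: "y \<in> L"
  have "\<forall>k. Tk k y = y" using unitary_T[of L y] u y unfolding unitary_on_def by blast
  then show ?thesis by (rule Hiso_orth[OF x])
qed

lemma HA_core2: "x \<in> H_uni V \<Longrightarrow> reducing sc ip V W L \<Longrightarrow> pure_on sc ip V L \<Longrightarrow> y \<in> L \<Longrightarrow> ip x y = 0"
proof -
  assume x: "x \<in> H_uni V" and r: "reducing sc ip V W L" and p: "pure_on sc ip V L" and y: "y \<in> L"
  have L1: "closed_subspace sc ip L" "V ` L \<subseteq> L" "W ` L \<subseteq> L"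
    using r unfolding reducing_def by blast+
  have "\<forall>k. Tk k x = x" using uni_T[OF x] by blast
  then show ?thesis by (rule pure_orth[OF L1 p _ y])
qed

lemma sub_core1: "reducing sc ip V W L \<Longrightarrow> pure_on sc ip V L \<Longrightarrow> L \<subseteq> H_iso ip V W"
  unfolding reducing_def using pure_Hiso by blast

lemma sub_core2: "unitary_on V L \<Longrightarrow> L \<subseteq> H_uni V"
  unfolding unitary_on_def by (rule unitary_Huni)

end

theorem proposition3p5:
  fixes sc :: "complex \<Rightarrow> 'h::ab_group_add \<Rightarrow> 'h" and ip :: "'h \<Rightarrow> 'h \<Rightarrow> complex"
    and n :: nat and z :: "nat \<Rightarrow> nat \<Rightarrow> complex" and V W :: "nat \<Rightarrow> 'h \<Rightarrow> 'h"
  assumes "hilbert_space sc ip" and "n \<ge> 1"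
    and "doubly_noncommuting sc ip n z V W"
  shows "(\<forall>A B LA LB. A \<subseteq> {1..n} \<and> B \<subseteq> {1..n} \<and> A \<noteq> B \<and>
            type_A_subspace sc ip n V W A LA \<and> type_A_subspace sc ip n V W B LB
            \<longrightarrow> horth ip LA LB)
       \<and> (\<forall>L :: nat set \<Rightarrow> 'h set.
            (\<forall>A\<in>Pow {1..n}. type_A_subspace sc ip n V W A (L A)) \<and>
            (\<forall>x. \<exists>f. (\<forall>A\<in>Pow {1..n}. f A \<in> L A) \<and> x = (\<Sum>A\<in>Pow {1..n}. f A)) \<and>
            (\<forall>f. (\<forall>A\<in>Pow {1..n}. f A \<in> L A) \<and> (\<Sum>A\<in>Pow {1..n}. f A) = 0
                 \<longrightarrow> (\<forall>A\<in>Pow {1..n}. f A = 0))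
            \<longrightarrow> (\<forall>A\<in>Pow {1..n}. L A = H_A ip n V W A))"
proof -
  have hsI: "hs sc ip" using assms(1) by (rule hs.intro)
  have opsi: "ops sc ip (V i) (W i)" if "i \<in> {1..n}" for i
    using assms(1,3) that unfolding ops_def ops_axioms_def hs_def doubly_noncommuting_def by blast
  have P1: "horth ip LA LB"
    if AB: "A \<subseteq> {1..n}" "B \<subseteq> {1..n}" "A \<noteq> B"
      and tA: "type_A_subspace sc ip n V W A LA" and tB: "type_A_subspace sc ip n V W B LB"
    for A B LA LB
  proof -
    obtain i where i: "(i \<in> A \<and> i \<notin> B) \<or> (i \<in> B \<and> i \<notin> A)" using AB(3) by blast
    then have iN: "i \<in> {1..n}" using AB by blast
    have redA: "reducing sc ip (V i) (W i) LA" and redB: "reducing sc ip (V i) (W i) LB"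
      using tA tB iN unfolding type_A_subspace_def by blast+
    show ?thesis unfolding horth_def
    proof (intro ballI)
      fix x y assume x: "x \<in> LA" and y: "y \<in> LB"
      from i show "ip x y = 0"
      proof
        assume "i \<in> A \<and> i \<notin> B"
        then have "pure_on sc ip (V i) LA" "unitary_on (V i) LB"
          using tA tB iN unfolding type_A_subspace_def by auto
        then have "ip y x = 0" using ops.orth_core[OF opsi[OF iN] redA _ _ x y] by blast
        then show "ip x y = 0" using hs.ip_sym[OF hsI, of x y] by simp
      next
        assume "i \<in> B \<and> i \<notin> A"
        then have "pure_on sc ip (V i) LB" "unitary_on (V i) LA"
          using tA tB iN unfolding type_A_subspace_def by auto
        then show "ip x y = 0" using ops.orth_core[OF opsi[OF iN] redB _ _ y x] by blast
      qed
    qed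
  qed
  have P2: "L A = H_A ip n V W A"
    if tL: "\<And>B. B \<in> Pow {1..n} \<Longrightarrow> type_A_subspace sc ip n V W B (L B)"
      and dec: "\<And>x. \<exists>f. (\<forall>B\<in>Pow {1..n}. f B \<in> L B) \<and> x = (\<Sum>B\<in>Pow {1..n}. f B)"
      and A: "A \<in> Pow {1..n}"
    for L :: "nat set \<Rightarrow> 'h set" and A
  proof -
    have sub: "L A \<subseteq> H_A ip n V W A"
    proof
      fix x assume x: "x \<in> L A"
      have "x \<in> H_iso ip (V i) (W i)" if iA: "i \<in> A" for i
      proof -
        have iN: "i \<in> {1..n}" using iA A by blast
        have "reducing sc ip (V i) (W i) (L A)" "pure_on sc ip (V i) (L A)"
          using tL[OF A] iN iA unfolding type_A_subspace_def by blast+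
        then show ?thesis using ops.sub_core1[OF opsi[OF iN]] x by blast
      qed
      moreover have "x \<in> H_uni (V i)" if iA: "i \<in> {1..n} - A" for i
      proof -
        have iN: "i \<in> {1..n}" using iA by blast
        have "unitary_on (V i) (L A)" using tL[OF A] iA unfolding type_A_subspace_def by blast
        then show ?thesis using ops.sub_core2[OF opsi[OF iN]] x by blast
      qed
      ultimately show "x \<in> H_A ip n V W A" unfolding H_A_def by blast
    qed
    have HAorth: "ip x y = 0"
      if x: "x \<in> H_A ip n V W A" and B: "B \<in> Pow {1..n}" "B \<noteq> A" and y: "y \<in> L B" for x y B
    proof -
      obtain i where i: "(i \<in> A \<and> i \<notin> B) \<or> (i \<in> B \<and> i \<notin> A)" using B(2) by blast
      then have iN: "i \<in> {1..n}" using A B(1) by blast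
      have red: "reducing sc ip (V i) (W i) (L B)" using tL[OF B(1)] iN unfolding type_A_subspace_def by blast
      from i show ?thesis
      proof
        assume iAB: "i \<in> A \<and> i \<notin> B"
        then have "x \<in> H_iso ip (V i) (W i)" using x unfolding H_A_def by blast
        moreover have "unitary_on (V i) (L B)" using tL[OF B(1)] iN iAB unfolding type_A_subspace_def by blast
        ultimately show ?thesis using ops.HA_core1[OF opsi[OF iN] _ _ y] by blast
      next
        assume iBA: "i \<in> B \<and> i \<notin> A"
        then have "x \<in> H_uni (V i)" using x iN unfolding H_A_def by blast
        moreover have "pure_on sc ip (V i) (L B)" using tL[OF B(1)] iBA unfolding type_A_subspace_def by blast
        ultimately show ?thesis using ops.HA_core2[OF opsi[OF iN] _ red _ y] by blast
      qed
    qed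
    have "H_A ip n V W A \<subseteq> L A"
    proof
      fix x assume x: "x \<in> H_A ip n V W A"
      obtain f where fL: "\<forall>B\<in>Pow {1..n}. f B \<in> L B" and xf: "x = (\<Sum>B\<in>Pow {1..n}. f B)"
        using dec by blast
      have f0: "f B = 0" if B: "B \<in> Pow {1..n}" "B \<noteq> A" for B
      proof -
        have s0: "(\<Sum>C\<in>Pow {1..n} - {B}. ip (f C) (f B)) = 0"
        proof (rule sum.neutral, rule ballI)
          fix C assume C: "C \<in> Pow {1..n} - {B}"
          have "horth ip (L C) (L B)" using P1 tL C B(1) by blast
          then show "ip (f C) (f B) = 0" using fL C B(1) unfolding horth_def by blast
        qed
        have "ip x (f B) = (\<Sum>C\<in>Pow {1..n}. ip (f C) (f B))" unfolding xf by (rule hs.ip_sumL[OF hsI])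
        also have "\<dots> = ip (f B) (f B) + (\<Sum>C\<in>Pow {1..n} - {B}. ip (f C) (f B))"
          using B(1) by (simp add: sum.remove)
        also have "\<dots> = ip (f B) (f B)" unfolding s0 by simp
        finally have "ip (f B) (f B) = ip x (f B)" by simp
        also have "\<dots> = 0" using HAorth[OF x B] fL B(1) by blast
        finally show "f B = 0" by (rule hs.ip_self_0[OF hsI])
      qed
      have "x = f A + (\<Sum>B\<in>Pow {1..n} - {A}. f B)" unfolding xf using A by (simp add: sum.remove)
      also have "(\<Sum>B\<in>Pow {1..n} - {A}. f B) = 0" using f0 by (intro sum.neutral) auto
      finally have "x = f A" by simp
      then show "x \<in> L A" using fL A by simp
    qed
    with sub show ?thesis by blast
  qed
  show ?thesis
  proof (intro conjI allI impI ballI)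
    fix A B LA LB
    assume "A \<subseteq> {1..n} \<and> B \<subseteq> {1..n} \<and> A \<noteq> B \<and>
            type_A_subspace sc ip n V W A LA \<and> type_A_subspace sc ip n V W B LB"
    then show "horth ip LA LB" using P1 by blast
  next
    fix L :: "nat set \<Rightarrow> 'h set" and A
    assume h: "(\<forall>A\<in>Pow {1..n}. type_A_subspace sc ip n V W A (L A)) \<and>
            (\<forall>x. \<exists>f. (\<forall>A\<in>Pow {1..n}. f A \<in> L A) \<and> x = (\<Sum>A\<in>Pow {1..n}. f A)) \<and>
            (\<forall>f. (\<forall>A\<in>Pow {1..n}. f A \<in> L A) \<and> (\<Sum>A\<in>Pow {1..n}. f A) = 0
                 \<longrightarrow> (\<forall>A\<in>Pow {1..n}. f A = 0))"
      and A: "A \<in> Pow {1..n}"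
    show "L A = H_A ip n V W A"
      by (rule P2[OF _ _ A]) (use h in blast)+
  qed
qed


end
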